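(* Let $d\ge2$, $\xi>0$, let $\sigma:\xi\mathbb{Z}^d\to\mathbb{R}$ be a generalized mass configuration and let $R_1>0$ be such that $\operatorname{supp}\sigma\subset\hat B_{R_1}$. Then for every $R_2>R_1+\xi$, $$\operatorname{GDS}_{R_2}(\operatorname{GDS}_{R_1}(\sigma))=\operatorname{GDS}_{R_2}(\sigma).$$
   Context: A generalized mass configuration on $\xi\mathbb{Z}^d$ is a bounded function with finite support. $\hat B_R:=B(0,R)\cap\xi\mathbb{Z}^d$. Neighbours $y'\sim y$ are lattice points at distance $\xi$; $\Delta f(y)=\frac{1}{2d\xi^2}\sum_{y'\sim y}(f(y')-f(y))$; toppling at $x$ is $T_x\eta(y):=\eta(y)+\eta_+(x)\xi^2\Delta\delta_x(y)$ (if $\eta(x)>0$, remove the mass $\eta(x)$ from $x$ and add $\eta(x)/(2d)$ to each neighbour; otherwise do nothing). For a generalized mass configuration $\tau$ with $\operatorname{supp}\tau\subset\hat B_R$, $\operatorname{GDS}_R(\tau)$ is the pointwise limit of the configurations obtained from $\tau$ by successively toppling at the points of a sequence in $\hat B_R$ in which every point of $\hat B_R$ occurs infinitely often; this limit exists, does not depend on the sequence, is supported in $\hat B_R\cup\partial\hat B_R$ (where $\partial S=\{y\notin S:\exists y'\in S,\ y\sim y'\}$), and equals $-\Delta v$ where $v(x)=\sup\{f(x):\Delta f\ge0\text{ in }\hat B_R,\ f\le U^\tau\text{ in }\xi\mathbb{Z}^d\}$, $U^\tau$ being the discrete potential of $\tau$ (satisfying $-\Delta U^\tau=\tau$). *)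

theory Defs
  imports "HOL-Analysis.Analysis" "HOL-Library.Infinite_Set"
begin

text \<open>Lattice \<xi>Z^d: a lattice point is represented by its integer coordinate vector
  z :: int^'d, standing for the point \<xi> z in R^d. The dimension is d = CARD('d).\<close>

definition emb :: "real \<Rightarrow> int^'d \<Rightarrow> real^'d" where
  "emb \<xi> z = \<xi> *\<^sub>R (\<chi> i. real_of_int (z $ i))"

definition gen_mass_config :: "(int^'d \<Rightarrow> real) \<Rightarrow> bool" where
  "gen_mass_config \<eta> \<longleftrightarrow> bdd_above (range (\<lambda>z. \<bar>\<eta> z\<bar>)) \<and> finite {z. \<eta> z \<noteq> 0}"

definition supp :: "(int^'d \<Rightarrow> real) \<Rightarrow> (int^'d) set" where
  "supp \<eta> = {z. \<eta> z \<noteq> 0}"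

definition Bhat :: "real \<Rightarrow> real \<Rightarrow> (int^'d) set" where
  "Bhat \<xi> R = {z. emb \<xi> z \<in> ball 0 R}"

definition nbr :: "real \<Rightarrow> int^'d \<Rightarrow> int^'d \<Rightarrow> bool" where
  "nbr \<xi> y' y \<longleftrightarrow> dist (emb \<xi> y') (emb \<xi> y) = \<xi>"

definition lap :: "real \<Rightarrow> (int^'d \<Rightarrow> real) \<Rightarrow> int^'d \<Rightarrow> real" where
  "lap \<xi> f y = (1 / (2 * real CARD('d) * \<xi>\<^sup>2)) * (\<Sum>y'\<in>{y'. nbr \<xi> y' y}. (f y' - f y))"

definition topple :: "real \<Rightarrow> int^'d \<Rightarrow> (int^'d \<Rightarrow> real) \<Rightarrow> (int^'d \<Rightarrow> real)" where
  "topple \<xi> x \<eta> = (\<lambda>y. \<eta> y + max (\<eta> x) 0 * \<xi>\<^sup>2 * lap \<xi> (\<lambda>w. if w = x then 1 else 0) y)"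

primrec topple_seq :: "real \<Rightarrow> (nat \<Rightarrow> int^'d) \<Rightarrow> nat \<Rightarrow> (int^'d \<Rightarrow> real) \<Rightarrow> (int^'d \<Rightarrow> real)" where
  "topple_seq \<xi> s 0 \<eta> = \<eta>"
| "topple_seq \<xi> s (Suc n) \<eta> = topple \<xi> (s n) (topple_seq \<xi> s n \<eta>)"

definition admissible_seq :: "real \<Rightarrow> real \<Rightarrow> (nat \<Rightarrow> int^'d) \<Rightarrow> bool" where
  "admissible_seq \<xi> R s \<longleftrightarrow> (\<forall>n. s n \<in> Bhat \<xi> R) \<and> (\<forall>x\<in>Bhat \<xi> R. \<exists>\<^sub>\<infinity>n. s n = x)"

text \<open>GDS_R(\<tau>): the pointwise limit of the toppling configurations along any admissible
  sequence (which exists and is independent of the sequence).\<close>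
definition GDS :: "real \<Rightarrow> real \<Rightarrow> (int^'d \<Rightarrow> real) \<Rightarrow> (int^'d \<Rightarrow> real)" where
  "GDS \<xi> R \<tau> = (THE \<omega>. \<forall>s. admissible_seq \<xi> R s \<longrightarrow>
        (\<forall>y. (\<lambda>n. topple_seq \<xi> s n \<tau> y) \<longlonglongrightarrow> \<omega> y))"

end

theory Submission
  imports Defs
begin

definition ev :: "'d \<Rightarrow> bool \<Rightarrow> int^'d" where
  "ev i b = (\<chi> j. if j = i then (if b then 1 else -1) else 0)"

definition sqn :: "int^'d \<Rightarrow> int" where
  "sqn z = (\<Sum>i\<in>UNIV. (z$i)^2)"

lemma nbr_iff:
  assumes "\<xi> > 0"
  shows "nbr \<xi> y' y \<longleftrightarrow> sqn (y' - y) = 1"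
proof -
  have "emb \<xi> y' - emb \<xi> y = \<xi> *\<^sub>R (\<chi> i. real_of_int ((y' - y)$i))"
    unfolding emb_def by (simp add: vec_eq_iff algebra_simps)
  hence "dist (emb \<xi> y') (emb \<xi> y) = \<xi> * norm (\<chi> i. real_of_int ((y' - y)$i))"
    using assms by (simp add: dist_norm)
  also have "norm (\<chi> i. real_of_int ((y' - y)$i)) = sqrt (of_int (sqn (y' - y)))"
    unfolding norm_vec_def L2_set_def sqn_def by simp
  finally have "nbr \<xi> y' y \<longleftrightarrow> \<xi> * sqrt (of_int (sqn (y' - y))) = \<xi>" unfolding nbr_def by simp
  also have "\<dots> \<longleftrightarrow> sqrt (of_int (sqn (y' - y))) = 1" using assms by simp
  also have "\<dots> \<longleftrightarrow> sqn (y' - y) = 1" by simp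
  finally show ?thesis .
qed

lemma sqn_ev: "sqn (ev i b) = 1"
proof -
  have "\<And>j. (ev i b $ j)^2 = (if j = i then 1 else (0::int))" by (simp add: ev_def)
  thus ?thesis unfolding sqn_def by simp
qed

lemma sqn_one: assumes "sqn z = 1" shows "\<exists>i b. z = ev i b"
proof -
  have nn: "\<And>j. (z$j)^2 \<ge> 0" by simp
  have "\<exists>i. z$i \<noteq> 0"
  proof (rule ccontr)
    assume "\<not> ?thesis" hence "\<forall>i. z$i = 0" by blast
    hence "sqn z = 0" unfolding sqn_def by simp
    with assms show False by simp
  qed
  then obtain i where i: "z$i \<noteq> 0" by blast
  have "(z$i)^2 \<le> sqn z" unfolding sqn_def by (rule member_le_sum) auto
  moreover have "(z$i)^2 \<ge> 1" using i by (smt (verit) power2_less_eq_zero_iff zero_le_power2 int_one_le_iff_zero_less)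
  ultimately have zi: "(z$i)^2 = 1" using assms by simp
  have "sqn z = (z$i)^2 + (\<Sum>j\<in>UNIV-{i}. (z$j)^2)" unfolding sqn_def
    by (simp add: sum.remove)
  hence s0: "(\<Sum>j\<in>UNIV-{i}. (z$j)^2) = 0" using zi assms by simp
  hence "\<forall>j\<in>UNIV-{i}. (z$j)^2 = 0" by (subst (asm) sum_nonneg_eq_0_iff) auto
  hence oth: "\<And>j. j \<noteq> i \<Longrightarrow> z$j = 0" by simp
  have "z$i = 1 \<or> z$i = -1" using zi by (simp add: power2_eq_1_iff)
  then show ?thesis
  proof
    assume "z$i = 1" hence "z = ev i True" using oth by (auto simp: ev_def vec_eq_iff)
    thus ?thesis by blast
  next
    assume "z$i = -1" hence "z = ev i False" using oth by (auto simp: ev_def vec_eq_iff)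
    thus ?thesis by blast
  qed
qed

lemma ev_inj: "inj (\<lambda>(i,b). ev i b :: int^'d)"
proof (rule injI, clarsimp)
  fix i j :: 'd and b c :: bool
  assume h: "ev i b = ev j c"
  hence "ev i b $ i = ev j c $ i" by simp
  hence "i = j" by (auto simp: ev_def split: if_splits)
  moreover with h have "ev i b $ i = ev i c $ i" by simp
  ultimately show "i = j \<and> b = c" by (auto simp: ev_def split: if_splits)
qed

lemma nbr_set:
  assumes "\<xi> > 0"
  shows "{y'. nbr \<xi> y' y} = (\<lambda>(i,b). y + ev i b) ` UNIV"
proof -
  have "{y'. nbr \<xi> y' y} = {y'. sqn (y' - y) = 1}" using nbr_iff[OF assms] by blast
  also have "\<dots> = (\<lambda>(i,b). y + ev i b) ` UNIV"
  proof (rule set_eqI, rule iffI)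
    fix x assume "x \<in> {y'. sqn (y' - y) = 1}"
    then obtain i b where "x - y = ev i b" using sqn_one by blast
    thus "x \<in> (\<lambda>(i,b). y + ev i b) ` UNIV" by (auto intro!: image_eqI[of _ _ "(i,b)"] simp: algebra_simps)
  next
    fix x assume "x \<in> (\<lambda>(i,b). y + ev i b) ` UNIV"
    thus "x \<in> {y'. sqn (y' - y) = 1}" by (auto simp: sqn_ev)
  qed
  finally show ?thesis .
qed

lemma inj_nbr: "inj (\<lambda>(i,b). y + ev i b :: int^'d)"
  using ev_inj unfolding inj_def by auto

lemma card_nbr:
  assumes "\<xi> > 0"
  shows "finite {y'. nbr \<xi> y' y}" "card {y'. nbr \<xi> y' (y::int^'d)} = 2 * CARD('d)"
proof -
  show "finite {y'. nbr \<xi> y' y}" unfolding nbr_set[OF assms] by simp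
  have "card {y'. nbr \<xi> y' y} = card (UNIV :: ('d \<times> bool) set)"
    unfolding nbr_set[OF assms] by (rule card_image[OF inj_nbr])
  also have "\<dots> = 2 * CARD('d)" by (simp add: card_UNIV_bool)
  finally show "card {y'. nbr \<xi> y' y} = 2 * CARD('d)" .
qed

lemma nbr_irrefl: "\<xi> > 0 \<Longrightarrow> \<not> nbr \<xi> y y"
  by (simp add: nbr_iff sqn_def)

lemma nbr_sym: "nbr \<xi> a b \<longleftrightarrow> nbr \<xi> b a"
  unfolding nbr_def by (simp add: dist_commute)


lemma lap_lin: "lap \<xi> (\<lambda>w. f w + c * g w) y = lap \<xi> f y + c * lap \<xi> g y"
  unfolding lap_def by (simp add: sum.distrib sum_distrib_left algebra_simps sum_subtractf)

lemma D_formula: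
  assumes "\<xi> > 0"
  shows "\<xi>\<^sup>2 * lap \<xi> f y = (\<Sum>y'\<in>{y'. nbr \<xi> y' y}. f y') / (2 * real CARD('d)) - f (y::int^'d)"
proof -
  have "\<xi>\<^sup>2 * lap \<xi> f y = (1 / (2 * real CARD('d))) * ((\<Sum>y'\<in>{y'. nbr \<xi> y' y}. f y') - real (card {y'. nbr \<xi> y' y}) * f y)"
    unfolding lap_def using assms by (simp add: sum_subtractf)
  also have "\<dots> = (\<Sum>y'\<in>{y'. nbr \<xi> y' y}. f y') / (2 * real CARD('d)) - f y"
    using card_nbr(2)[OF assms, of y] by (simp add: field_simps)
  finally show ?thesis .
qed

lemma lap_delta_self:
  assumes "\<xi> > 0"
  shows "\<xi>\<^sup>2 * lap \<xi> (\<lambda>w. if w = x then 1 else 0) (x::int^'d) = -1"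
proof -
  have "(\<Sum>y'\<in>{y'. nbr \<xi> y' x}. (if y' = x then 1 else 0::real)) = 0"
    using nbr_irrefl[OF assms, of x] by (intro sum.neutral) auto
  thus ?thesis unfolding D_formula[OF assms] by simp
qed

lemma lap_delta_other:
  assumes "\<xi> > 0" "y \<noteq> x"
  shows "lap \<xi> (\<lambda>w. if w = x then 1 else 0) (y::int^'d) \<ge> 0"
  unfolding lap_def using assms by (intro mult_nonneg_nonneg sum_nonneg) auto

lemma topple_self:
  assumes "\<xi> > 0"
  shows "topple \<xi> x \<eta> x = \<eta> x - max (\<eta> x) 0"
  unfolding topple_def using lap_delta_self[OF assms, of x] by (simp add: mult.assoc)

lemma topple_other:
  assumes "\<xi> > 0" "y \<noteq> x"
  shows "topple \<xi> x \<eta> y \<ge> \<eta> y"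
  unfolding topple_def using lap_delta_other[OF assms] by simp

lemma sum_nbr:
  assumes "\<xi> > 0"
  shows "(\<Sum>y'\<in>{y'. nbr \<xi> y' y}. g y') = (\<Sum>p\<in>UNIV. g ((\<lambda>(i,b). y + ev i b) p))"
  unfolding nbr_set[OF assms] by (rule sum.reindex[OF inj_nbr, unfolded comp_def])

lemma sum_UNIV_prod: "(\<Sum>p\<in>UNIV. H p) = (\<Sum>i\<in>UNIV. \<Sum>b\<in>UNIV. H (i,b))"
proof -
  have "(\<Sum>i\<in>UNIV. \<Sum>b\<in>UNIV. H (i,b)) = (\<Sum>(i,b)\<in>UNIV \<times> UNIV. H (i,b))"
    by (rule sum.cartesian_product)
  also have "\<dots> = (\<Sum>p\<in>UNIV. H p)" by (simp add: case_prod_beta')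
  finally show ?thesis by simp
qed

lemma quad_sum:
  assumes "\<xi> > 0"
  shows "(\<Sum>y'\<in>{y'. nbr \<xi> y' y}. real_of_int ((y'$k)^2)) = 2 * real CARD('d) * real_of_int (((y::int^'d)$k)^2) + 2"
proof -
  have "(\<Sum>y'\<in>{y'. nbr \<xi> y' y}. real_of_int ((y'$k)^2))
      = (\<Sum>p\<in>UNIV. real_of_int ((((\<lambda>(i,b). y + ev i b) p)$k)^2))" by (rule sum_nbr[OF assms])
  also have "\<dots> = (\<Sum>i\<in>UNIV. \<Sum>b\<in>UNIV. real_of_int (((y + ev i b)$k)^2))"
    by (subst sum_UNIV_prod) simp
  also have "\<dots> = (\<Sum>i\<in>UNIV. 2 * real_of_int ((y$k)^2) + (if i = k then 2 else 0))"
  proof (rule sum.cong[OF refl])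
    fix i
    show "(\<Sum>b\<in>UNIV. real_of_int (((y + ev i b)$k)^2)) = 2 * real_of_int ((y$k)^2) + (if i = k then 2 else 0)"
      by (cases "i = k") (simp_all add: ev_def UNIV_bool power2_eq_square algebra_simps)
  qed
  also have "\<dots> = 2 * real CARD('d) * real_of_int ((y$k)^2) + 2"
    by (simp add: sum.distrib)
  finally show ?thesis .
qed

lemma finite_Bhat:
  assumes "\<xi> > 0"
  shows "finite (Bhat \<xi> R :: (int^'d) set)"
proof -
  define K where "K = \<lceil>R / \<xi>\<rceil>"
  have sub: "Bhat \<xi> R \<subseteq> (\<lambda>f. \<chi> i. f i) ` (PiE UNIV (\<lambda>_::'d. {-K..K}))"
  proof
    fix z :: "int^'d" assume "z \<in> Bhat \<xi> R"
    hence n: "norm (emb \<xi> z) < R" by (simp add: Bhat_def)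
    have "\<forall>i. z$i \<in> {-K..K}"
    proof
      fix i
      have "\<bar>emb \<xi> z $ i\<bar> \<le> norm (emb \<xi> z)" by (rule component_le_norm_cart)
      hence a: "\<bar>real_of_int (z$i)\<bar> \<le> norm (emb 1 z)" and b: "\<xi> * norm (emb 1 z) < R" using n assms by (simp_all add: emb_def abs_mult)
      hence "\<xi> * \<bar>real_of_int (z$i)\<bar> < R" using assms by (meson le_less_trans mult_left_mono less_imp_le)
      hence "\<bar>real_of_int (z$i)\<bar> < R / \<xi>" using assms by (simp add: field_simps)
      hence "\<bar>real_of_int (z$i)\<bar> \<le> real_of_int K" unfolding K_def
        by (meson le_of_int_ceiling less_le_not_le order_trans nle_le)
      hence "\<bar>z$i\<bar> \<le> K" by (metis of_int_abs of_int_le_iff)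
      thus "z$i \<in> {-K..K}" by (simp add: abs_le_iff)
    qed
    thus "z \<in> (\<lambda>f. \<chi> i. f i) ` (PiE UNIV (\<lambda>_::'d. {-K..K}))"
      by (intro image_eqI[of _ _ "\<lambda>i. z$i"]) auto
  qed
  show ?thesis by (rule finite_subset[OF sub]) (intro finite_imageI finite_PiE; simp)
qed

lemma zero_Bhat: "R > 0 \<Longrightarrow> 0 \<in> (Bhat \<xi> R :: (int^'d) set)"
proof -
  assume "R > 0" moreover have "(\<chi> i. (0::real)) = (0::real^'d)" by (simp add: vec_eq_iff)
  ultimately show ?thesis by (simp add: Bhat_def emb_def)
qed


definition Dl :: "real \<Rightarrow> (int^'d \<Rightarrow> real) \<Rightarrow> int^'d \<Rightarrow> real" where
  "Dl \<xi> f y = \<xi>\<^sup>2 * lap \<xi> f y"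

definition good :: "real \<Rightarrow> (int^'d) set \<Rightarrow> (int^'d \<Rightarrow> real) \<Rightarrow> (int^'d \<Rightarrow> real) \<Rightarrow> bool" where
  "good \<xi> A \<tau> U \<longleftrightarrow> (\<forall>y. U y \<ge> 0) \<and> (\<forall>y. y \<notin> A \<longrightarrow> U y = 0) \<and>
     (\<forall>y\<in>A. \<tau> y + Dl \<xi> U y \<le> 0) \<and> (\<forall>y. U y > 0 \<longrightarrow> \<tau> y + Dl \<xi> U y = 0)"

lemma Dl_lin: "Dl \<xi> (\<lambda>w. f w + c * g w) y = Dl \<xi> f y + c * Dl \<xi> g y"
  unfolding Dl_def lap_lin by (simp add: algebra_simps)

lemma Dl_diff: "Dl \<xi> (\<lambda>w. f w - g w) y = Dl \<xi> f y - Dl \<xi> g y"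
  using Dl_lin[of \<xi> f "-1" g y] by simp

lemma Dl_add: "Dl \<xi> (\<lambda>w. f w + g w) y = Dl \<xi> f y + Dl \<xi> g y"
  using Dl_lin[of \<xi> f "1" g y] by simp

lemma Dl_formula: "\<xi> > 0 \<Longrightarrow> Dl \<xi> f y = (\<Sum>y'\<in>{y'. nbr \<xi> y' y}. f y') / (2 * real CARD('d)) - f (y::int^'d)"
  unfolding Dl_def by (rule D_formula)

lemma Dl_nonneg_max:
  assumes "\<xi> > 0" "Dl \<xi> W x \<ge> 0" "\<And>y. W y \<le> W (x::int^'d)" "nbr \<xi> y' x"
  shows "W y' = W x"
proof -
  have fin: "finite {y'. nbr \<xi> y' x}" by (rule card_nbr(1)[OF assms(1)])
  have "Dl \<xi> W x = (1 / (2 * real CARD('d))) * (\<Sum>y'\<in>{y'. nbr \<xi> y' x}. (W y' - W x))"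
    unfolding Dl_def lap_def using assms(1) by simp
  hence "(\<Sum>y'\<in>{y'. nbr \<xi> y' x}. (W y' - W x)) \<ge> 0" using assms(2)
    by (simp add: zero_le_divide_iff)
  hence "(\<Sum>y'\<in>{y'. nbr \<xi> y' x}. (W x - W y')) \<le> 0" by (simp add: sum_subtractf)
  moreover have "(\<Sum>y'\<in>{y'. nbr \<xi> y' x}. (W x - W y')) \<ge> 0" using assms(3) by (intro sum_nonneg) auto
  ultimately have "(\<Sum>y'\<in>{y'. nbr \<xi> y' x}. (W x - W y')) = 0" by simp
  hence "\<forall>y'\<in>{y'. nbr \<xi> y' x}. W x - W y' = 0" using fin assms(3) by (subst (asm) sum_nonneg_eq_0_iff) auto
  thus ?thesis using assms(4) by simp
qed

lemma nbr_up: "\<xi> > 0 \<Longrightarrow> nbr \<xi> (x + ev i True) x"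
  by (simp add: nbr_iff sqn_ev)

lemma good_le:
  assumes xi: "\<xi> > 0" and fin: "finite A" and gU: "good \<xi> A \<tau> U" and gV: "good \<xi> A \<tau> V"
  shows "U (y::int^'d) \<le> (V y :: real)"
proof (rule ccontr)
  assume "\<not> U y \<le> V y"
  hence yA: "y \<in> A" and pos: "U y - V y > 0" using gU gV unfolding good_def by force+
  define W where "W = (\<lambda>z. U z - V z)"
  define m where "m = Max (W ` A)"
  have Wout: "\<And>z. z \<notin> A \<Longrightarrow> W z = 0" using gU gV unfolding good_def W_def by auto
  have mA: "\<And>z. z \<in> A \<Longrightarrow> W z \<le> m" unfolding m_def using fin by auto
  have "W y \<le> m" using mA yA .
  hence mpos: "m > 0" using pos W_def by simp
  have Wle: "\<And>z. W z \<le> m" using mA Wout mpos by (metis less_eq_real_def)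
  define T where "T = {z\<in>A. W z = m}"
  have "m \<in> W ` A" unfolding m_def using fin yA by (intro Max_in) auto
  hence Tne: "T \<noteq> {}" unfolding T_def by auto
  have Tfin: "finite T" using fin T_def by simp
  define i0 where "i0 = (undefined::'d)"
  define M where "M = Max ((\<lambda>z. z$i0) ` T)"
  have "M \<in> (\<lambda>z. z$i0) ` T" unfolding M_def using Tfin Tne by (intro Max_in) auto
  then obtain x where xT: "x \<in> T" and xM: "x$i0 = M" by auto
  have TM: "\<And>z. z \<in> T \<Longrightarrow> z$i0 \<le> M" unfolding M_def using Tfin by auto
  have xA: "x \<in> A" and Wx: "W x = m" using xT T_def by auto
  hence "U x > V x" using mpos W_def by simp
  moreover have "V x \<ge> 0" using gV good_def by blast
  ultimately have "U x > 0" by linarith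
  hence eqU: "\<tau> x + Dl \<xi> U x = 0" using gU good_def by blast
  have leV: "\<tau> x + Dl \<xi> V x \<le> 0" using gV xA good_def by blast
  have "Dl \<xi> W x \<ge> 0" unfolding W_def Dl_diff using eqU leV by linarith
  hence "W (x + ev i0 True) = W x" using Dl_nonneg_max[OF xi, of W x] Wle Wx nbr_up[OF xi] by auto
  hence "W (x + ev i0 True) = m" using Wx by simp
  hence "x + ev i0 True \<in> T" unfolding T_def using Wout mpos by (cases "x + ev i0 True \<in> A") auto
  hence "(x + ev i0 True)$i0 \<le> M" by (rule TM)
  thus False using xM by (simp add: ev_def)
qed

lemma good_unique:
  assumes "\<xi> > 0" "finite A" "good \<xi> A \<tau> U" "good \<xi> A \<tau> V"
  shows "U = V"
  using good_le[OF assms] good_le[OF assms(1,2,4,3)] by (intro ext antisym) 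


primrec odo :: "real \<Rightarrow> (nat \<Rightarrow> int^'d) \<Rightarrow> (int^'d \<Rightarrow> real) \<Rightarrow> nat \<Rightarrow> int^'d \<Rightarrow> real" where
  "odo \<xi> s \<tau> 0 = (\<lambda>_. 0)"
| "odo \<xi> s \<tau> (Suc n) = (\<lambda>y. odo \<xi> s \<tau> n y + max (topple_seq \<xi> s n \<tau> (s n)) 0 * (if y = s n then 1 else 0))"

lemma eta_odo: "topple_seq \<xi> s n \<tau> y = \<tau> y + Dl \<xi> (odo \<xi> s \<tau> n) y"
proof (induction n arbitrary: y)
  case 0
  have "Dl \<xi> (\<lambda>_. 0) y = 0" unfolding Dl_def lap_def by simp
  thus ?case by simp
next
  case (Suc n)
  show ?case
    unfolding topple_seq.simps odo.simps Dl_lin topple_def Suc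
    by (simp add: Dl_def algebra_simps)
qed

lemma odo_nonneg: "odo \<xi> s \<tau> n y \<ge> 0"
  by (induction n) auto

lemma odo_mono: "odo \<xi> s \<tau> n y \<le> odo \<xi> s \<tau> (Suc n) y"
  by simp

lemma odo_incseq: "incseq (\<lambda>n. odo \<xi> s \<tau> n y)"
  by (rule incseq_SucI) (rule odo_mono)

lemma odo_out: "(\<forall>n. s n \<in> A) \<Longrightarrow> y \<notin> A \<Longrightarrow> odo \<xi> s \<tau> n y = 0"
  by (induction n) auto

lemma eta_pos:
  assumes xi: "\<xi> > 0"
  shows "odo \<xi> s \<tau> n y > 0 \<Longrightarrow> topple_seq \<xi> s n \<tau> y \<ge> 0"
proof (induction n)
  case 0 thus ?case by simp
next
  case (Suc n)
  show ?case
  proof (cases "y = s n")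
    case True
    have "topple_seq \<xi> s (Suc n) \<tau> y = topple_seq \<xi> s n \<tau> y - max (topple_seq \<xi> s n \<tau> y) 0"
      using topple_self[OF xi] True by simp
    moreover have "odo \<xi> s \<tau> n y > 0 \<or> topple_seq \<xi> s n \<tau> y > 0"
      using Suc.prems True odo_nonneg[of \<xi> s \<tau> n y] by (auto simp: max_def split: if_splits)
    ultimately show ?thesis using Suc.IH by auto
  next
    case False
    hence "odo \<xi> s \<tau> n y > 0" using Suc.prems by simp
    hence "topple_seq \<xi> s n \<tau> y \<ge> 0" by (rule Suc.IH)
    moreover have "topple_seq \<xi> s (Suc n) \<tau> y \<ge> topple_seq \<xi> s n \<tau> y"
      using topple_other[OF xi False] by simp
    ultimately show ?thesis by linarith
  qed
qed

lemma least_action: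
  assumes xi: "\<xi> > 0" and sA: "\<forall>n. s n \<in> A"
    and sup1: "\<forall>y\<in>A. \<tau> y + Dl \<xi> v y \<le> 0" and sup2: "\<forall>y\<in>A. v y \<ge> 0"
    and sup3: "\<forall>y\<in>A. \<forall>y'. nbr \<xi> y' y \<longrightarrow> v y' \<ge> 0"
  shows "\<forall>y\<in>A. odo \<xi> s \<tau> n (y::int^'d) \<le> v y"
proof (induction n)
  case 0 thus ?case using sup2 by simp
next
  case (Suc n)
  show ?case
  proof
    fix y assume yA: "y \<in> A"
    show "odo \<xi> s \<tau> (Suc n) y \<le> v y"
    proof (cases "y = s n")
      case False thus ?thesis using Suc yA by simp
    next
      case True
      let ?u = "odo \<xi> s \<tau> n"
      let ?c = "2 * real CARD('d)"
      have c: "?c > 0" by simp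
      have le: "(\<Sum>y'\<in>{y'. nbr \<xi> y' y}. ?u y') \<le> (\<Sum>y'\<in>{y'. nbr \<xi> y' y}. v y')"
      proof (rule sum_mono)
        fix y' assume "y' \<in> {y'. nbr \<xi> y' y}"
        hence nb: "nbr \<xi> y' y" by simp
        show "?u y' \<le> v y'"
        proof (cases "y' \<in> A")
          case True thus ?thesis using Suc by blast
        next
          case False thus ?thesis using odo_out[OF sA False] sup3 yA nb by simp
        qed
      qed
      have "odo \<xi> s \<tau> (Suc n) y = ?u y + max (\<tau> y + Dl \<xi> ?u y) 0"
        using True eta_odo[of \<xi> s n \<tau> y] by simp
      also have "\<dots> = max (\<tau> y + (\<Sum>y'\<in>{y'. nbr \<xi> y' y}. ?u y') / ?c) (?u y)"
        unfolding Dl_formula[OF xi] by (simp add: max_def)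
      also have "\<dots> \<le> v y"
      proof (rule max.boundedI)
        have "(\<Sum>y'\<in>{y'. nbr \<xi> y' y}. ?u y') / ?c \<le> (\<Sum>y'\<in>{y'. nbr \<xi> y' y}. v y') / ?c"
          using le c by (simp add: divide_right_mono)
        moreover have "\<tau> y + ((\<Sum>y'\<in>{y'. nbr \<xi> y' y}. v y') / ?c - v y) \<le> 0"
          using sup1 yA unfolding Dl_formula[OF xi] by blast
        ultimately show "\<tau> y + (\<Sum>y'\<in>{y'. nbr \<xi> y' y}. ?u y') / ?c \<le> v y" by linarith
        show "?u y \<le> v y" using Suc yA by blast
      qed
      finally show ?thesis .
    qed
  qed
qed


lemma exists_super:
  assumes xi: "\<xi> > 0" and fin: "finite (A :: (int^'d) set)"
  shows "\<exists>v. (\<forall>y\<in>A. \<tau> y + Dl \<xi> v y \<le> 0) \<and> (\<forall>y\<in>A. v y \<ge> 0) \<and>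
             (\<forall>y\<in>A. \<forall>y'. nbr \<xi> y' y \<longrightarrow> v y' \<ge> 0)"
proof -
  define i0 where "i0 = (undefined::'d)"
  define d where "d = real CARD('d)"
  have d: "d \<ge> 1" unfolding d_def by (simp add: Suc_leI)
  define M where "M = d * (\<Sum>y\<in>A. \<bar>\<tau> y\<bar>)"
  define K where "K = (\<Sum>z\<in>A. (real_of_int \<bar>z$i0\<bar> + 1)^2)"
  define v where "v = (\<lambda>z::int^'d. M * (K - real_of_int ((z$i0)^2)))"
  have M0: "M \<ge> 0" unfolding M_def using d by (simp add: sum_nonneg)
  have Kz: "(real_of_int \<bar>z$i0\<bar> + 1)^2 \<le> K" if "z \<in> A" for z
    unfolding K_def using fin that by (intro member_le_sum) auto
  have "\<tau> y + Dl \<xi> v y \<le> 0" if yA: "y \<in> A" for y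
  proof -
    have "(\<Sum>y'\<in>{y'. nbr \<xi> y' y}. v y') = M * (2 * d * K - (2 * d * real_of_int ((y$i0)^2) + 2))"
      unfolding v_def using quad_sum[OF xi, where y=y and k=i0] card_nbr[OF xi, of y]
      by (simp add: sum_distrib_left[symmetric] sum_subtractf d_def)
    moreover have "v y = M * (K - real_of_int ((y$i0)^2))" by (simp add: v_def)
    ultimately have "Dl \<xi> v y = M * (2 * d * K - (2 * d * real_of_int ((y$i0)^2) + 2)) / (2 * d) - M * (K - real_of_int ((y$i0)^2))"
      unfolding Dl_formula[OF xi] d_def by simp
    also have "\<dots> = - M / d" using d by (simp add: field_simps)
    finally have "Dl \<xi> v y = - M / d" .
    moreover have "\<tau> y \<le> \<bar>\<tau> y\<bar>" by simp
    moreover have "\<bar>\<tau> y\<bar> \<le> (\<Sum>y\<in>A. \<bar>\<tau> y\<bar>)" using fin yA by (intro member_le_sum) auto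
    moreover have "M / d = (\<Sum>y\<in>A. \<bar>\<tau> y\<bar>)" unfolding M_def using d by simp
    ultimately show ?thesis by linarith
  qed
  moreover have "v y \<ge> 0" if "y \<in> A" for y
  proof -
    have "real_of_int ((y$i0)^2) \<le> (real_of_int \<bar>y$i0\<bar> + 1)^2"
      by (simp add: power2_eq_square algebra_simps)
    thus ?thesis unfolding v_def using M0 Kz[OF that] by simp
  qed
  moreover have "v y' \<ge> 0" if yA: "y \<in> A" and nb: "nbr \<xi> y' y" for y y'
  proof -
    have "y' \<in> (\<lambda>(i,b). y + ev i b) ` UNIV" using nb nbr_set[OF xi] by blast
    then obtain i b where y': "y' = y + ev i b" by auto
    have "\<bar>y'$i0\<bar> \<le> \<bar>y$i0\<bar> + 1" unfolding y' by (auto simp: ev_def)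
    hence "real_of_int \<bar>y'$i0\<bar> \<le> real_of_int \<bar>y$i0\<bar> + 1" by linarith
    hence "(real_of_int \<bar>y'$i0\<bar>)^2 \<le> (real_of_int \<bar>y$i0\<bar> + 1)^2"
      by (intro power_mono) auto
    hence "real_of_int ((y'$i0)^2) \<le> K" using Kz[OF yA] by simp
    thus ?thesis unfolding v_def using M0 by simp
  qed
  ultimately show ?thesis by blast
qed


lemma odo_limit:
  assumes xi: "\<xi> > 0" and fin: "finite (A :: (int^'d) set)" and sA: "\<forall>n. s n \<in> A"
  shows "\<exists>U. \<forall>y. (\<lambda>n. odo \<xi> s \<tau> n y) \<longlonglongrightarrow> U y"
proof -
  obtain v where v: "\<forall>y\<in>A. \<tau> y + Dl \<xi> v y \<le> 0" "\<forall>y\<in>A. v y \<ge> 0"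
             "\<forall>y\<in>A. \<forall>y'. nbr \<xi> y' y \<longrightarrow> v y' \<ge> 0"
    using exists_super[OF xi fin] by blast
  have "(\<lambda>n. odo \<xi> s \<tau> n y) \<longlonglongrightarrow> (SUP n. odo \<xi> s \<tau> n y)" for y
  proof (rule LIMSEQ_incseq_SUP[OF _ odo_incseq])
    show "bdd_above (range (\<lambda>n. odo \<xi> s \<tau> n y))"
    proof (cases "y \<in> A")
      case True
      thus ?thesis using least_action[OF xi sA v] by (intro bdd_aboveI2[of _ _ "v y"]) auto
    next
      case False
      thus ?thesis using odo_out[OF sA False] by (intro bdd_aboveI2[of _ _ 0]) auto
    qed
  qed
  thus ?thesis by (intro exI[of _ "\<lambda>y. (SUP n. odo \<xi> s \<tau> n y)"]) simp
qed

lemma eta_limit: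
  assumes xi: "\<xi> > 0" and conv: "\<forall>y. (\<lambda>n. odo \<xi> s \<tau> n y) \<longlonglongrightarrow> U y"
  shows "(\<lambda>n. topple_seq \<xi> s n \<tau> y) \<longlonglongrightarrow> \<tau> y + Dl \<xi> U (y::int^'d)"
  unfolding eta_odo Dl_formula[OF xi]
  by (auto intro!: tendsto_intros conv[rule_format])

lemma limit_good:
  assumes xi: "\<xi> > 0" and fin: "finite (A :: (int^'d) set)" and sA: "\<forall>n. s n \<in> A"
    and inf: "\<forall>x\<in>A. \<exists>\<^sub>\<infinity>n. s n = x"
    and conv: "\<forall>y. (\<lambda>n. odo \<xi> s \<tau> n y) \<longlonglongrightarrow> U y"
  shows "good \<xi> A \<tau> U"
  unfolding good_def
proof (intro conjI allI impI ballI)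
  fix y
  show "U y \<ge> 0" by (rule LIMSEQ_le_const[OF conv[rule_format, of y]]) (simp add: odo_nonneg)
next
  fix y assume "y \<notin> A"
  hence "(\<lambda>n. odo \<xi> s \<tau> n y) = (\<lambda>n. 0)" using odo_out[OF sA] by auto
  thus "U y = 0" using conv[rule_format, of y] by (metis LIMSEQ_unique tendsto_const)
next
  fix y assume yA: "y \<in> A"
  let ?L = "\<tau> y + Dl \<xi> U y"
  have lim: "(\<lambda>n. topple_seq \<xi> s (Suc n) \<tau> y) \<longlonglongrightarrow> ?L"
    using eta_limit[OF xi conv] by (rule LIMSEQ_Suc)
  show "?L \<le> 0"
  proof (rule ccontr)
    assume "\<not> ?L \<le> 0"
    hence "eventually (\<lambda>n. topple_seq \<xi> s (Suc n) \<tau> y > 0) sequentially"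
      using lim by (intro order_tendstoD(1)) auto
    then obtain N where N: "\<And>n. n \<ge> N \<Longrightarrow> topple_seq \<xi> s (Suc n) \<tau> y > 0"
      unfolding eventually_sequentially by blast
    obtain n where "n > N" "s n = y" using inf yA unfolding INFM_nat by blast
    hence "topple_seq \<xi> s (Suc n) \<tau> y \<le> 0" using topple_self[OF xi, of y] by simp
    with N[of n] \<open>n > N\<close> show False by simp
  qed
next
  fix y assume Upos: "U y > 0"
  have "\<exists>n. odo \<xi> s \<tau> n y > 0"
  proof (rule ccontr)
    assume "\<not> ?thesis"
    hence "\<forall>n. odo \<xi> s \<tau> n y \<le> 0" by (meson not_less)
    hence "U y \<le> 0" by (intro LIMSEQ_le_const2[OF conv[rule_format, of y]]) blast
    thus False using Upos by simp
  qed
  then obtain n0 where n0: "odo \<xi> s \<tau> n0 y > 0" by blast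
  have "\<forall>n\<ge>n0. topple_seq \<xi> s n \<tau> y \<ge> 0"
  proof (intro allI impI)
    fix n assume "n \<ge> n0"
    hence "odo \<xi> s \<tau> n0 y \<le> odo \<xi> s \<tau> n y" using odo_incseq unfolding incseq_def by blast
    thus "topple_seq \<xi> s n \<tau> y \<ge> 0" using n0 eta_pos[OF xi, of s \<tau> n y] by linarith
  qed
  hence ge: "\<tau> y + Dl \<xi> U y \<ge> 0" by (intro LIMSEQ_le_const[OF eta_limit[OF xi conv]]) blast
  have yA: "y \<in> A"
  proof (rule ccontr)
    assume "y \<notin> A"
    hence "(\<lambda>n. odo \<xi> s \<tau> n y) = (\<lambda>n. 0)" using odo_out[OF sA] by auto
    hence "U y = 0" using conv[rule_format, of y] by (metis LIMSEQ_unique tendsto_const)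
    thus False using Upos by simp
  qed
  let ?L = "\<tau> y + Dl \<xi> U y"
  have lim: "(\<lambda>n. topple_seq \<xi> s (Suc n) \<tau> y) \<longlonglongrightarrow> ?L"
    using eta_limit[OF xi conv] by (rule LIMSEQ_Suc)
  have "?L \<le> 0"
  proof (rule ccontr)
    assume "\<not> ?L \<le> 0"
    hence "eventually (\<lambda>n. topple_seq \<xi> s (Suc n) \<tau> y > 0) sequentially"
      using lim by (intro order_tendstoD(1)) auto
    then obtain N where N: "\<And>n. n \<ge> N \<Longrightarrow> topple_seq \<xi> s (Suc n) \<tau> y > 0"
      unfolding eventually_sequentially by blast
    obtain n where "n > N" "s n = y" using inf yA unfolding INFM_nat by blast
    hence "topple_seq \<xi> s (Suc n) \<tau> y \<le> 0" using topple_self[OF xi, of y] by simp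
    with N[of n] \<open>n > N\<close> show False by simp
  qed
  thus "?L = 0" using ge by simp
qed


lemma exists_adm:
  assumes fin: "finite A" and ne: "A \<noteq> {}"
  shows "\<exists>s::nat \<Rightarrow> 'a. (\<forall>n. s n \<in> A) \<and> (\<forall>x\<in>A. \<exists>\<^sub>\<infinity>n::nat. s n = x)"
proof -
  obtain xs where xs: "set xs = A" using finite_list[OF fin] by blast
  define L where "L = length xs"
  have L: "L > 0" using xs ne L_def by auto
  define s where "s = (\<lambda>n. xs ! (n mod L))"
  have "\<forall>n. s n \<in> A" unfolding s_def using L xs L_def by auto
  moreover have "\<forall>x\<in>A. \<exists>\<^sub>\<infinity>n. s n = x"
  proof
    fix x assume "x \<in> A"
    then obtain k where k: "k < L" "xs ! k = x" using xs L_def by (auto simp: in_set_conv_nth)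
    show "\<exists>\<^sub>\<infinity>n. s n = x" unfolding INFM_nat
    proof
      fix m
      have "(k + (m+1) * L) mod L = k mod L" by (rule mod_mult_self1)
      hence "(k + (m+1) * L) mod L = k" using k by simp
      moreover have "k + (m+1) * L > m"
      proof -
        have a: "m \<le> m * L" using L by simp
        have e: "k + (m+1)*L = k + L + m*L" by (simp add: algebra_simps)
        show ?thesis unfolding e using a L by linarith
      qed
      ultimately show "\<exists>n>m. s n = x" unfolding s_def using k(2) by metis
    qed
  qed
  ultimately have "(\<forall>n. s n \<in> A) \<and> (\<forall>x\<in>A. \<exists>\<^sub>\<infinity>n. s n = x)" by (rule conjI)
  thus ?thesis by (rule exI[where x=s])
qed

lemma GDS_char:
  assumes xi: "\<xi> > 0" and R: "R > 0"
  shows "\<exists>U. good \<xi> (Bhat \<xi> R) \<tau> U \<and> GDS \<xi> R \<tau> = (\<lambda>y. \<tau> y + Dl \<xi> U (y::int^'d))"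
proof -
  let ?A = "Bhat \<xi> R :: (int^'d) set"
  have fin: "finite ?A" by (rule finite_Bhat[OF xi])
  have ne: "?A \<noteq> {}" using zero_Bhat[OF R] by blast
  obtain s0 :: "nat \<Rightarrow> int^'d" where s0: "admissible_seq \<xi> R s0"
    using exists_adm[OF fin ne] unfolding admissible_seq_def by blast
  obtain U where U: "\<forall>y. (\<lambda>n. odo \<xi> s0 \<tau> n y) \<longlonglongrightarrow> U y"
    using odo_limit[OF xi fin] s0 unfolding admissible_seq_def by blast
  have gU: "good \<xi> ?A \<tau> U" using limit_good[OF xi fin _ _ U] s0 unfolding admissible_seq_def by blast
  define \<omega> where "\<omega> = (\<lambda>y. \<tau> y + Dl \<xi> U (y::int^'d))"
  have P: "\<forall>s. admissible_seq \<xi> R s \<longrightarrow> (\<forall>y. (\<lambda>n. topple_seq \<xi> s n \<tau> y) \<longlonglongrightarrow> \<omega> y)"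
  proof (intro allI impI)
    fix s :: "nat \<Rightarrow> int^'d" and y assume s: "admissible_seq \<xi> R s"
    obtain V where V: "\<forall>y. (\<lambda>n. odo \<xi> s \<tau> n y) \<longlonglongrightarrow> V y"
      using odo_limit[OF xi fin] s unfolding admissible_seq_def by blast
    have gV: "good \<xi> ?A \<tau> V" using limit_good[OF xi fin _ _ V] s unfolding admissible_seq_def by blast
    have "V = U" by (rule good_unique[OF xi fin gV gU])
    thus "(\<lambda>n. topple_seq \<xi> s n \<tau> y) \<longlonglongrightarrow> \<omega> y" using eta_limit[OF xi V] \<omega>_def by simp
  qed
  have "GDS \<xi> R \<tau> = \<omega>"
    unfolding GDS_def
  proof (rule the_equality)
    show "\<forall>s. admissible_seq \<xi> R s \<longrightarrow> (\<forall>y. (\<lambda>n. topple_seq \<xi> s n \<tau> y) \<longlonglongrightarrow> \<omega> y)" by (rule P)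
  next
    fix \<omega>' assume "\<forall>s. admissible_seq \<xi> R s \<longrightarrow> (\<forall>y. (\<lambda>n. topple_seq \<xi> s n \<tau> y) \<longlonglongrightarrow> \<omega>' y)"
    hence "\<forall>y. (\<lambda>n. topple_seq \<xi> s0 n \<tau> y) \<longlonglongrightarrow> \<omega>' y" using s0 by blast
    moreover have "\<forall>y. (\<lambda>n. topple_seq \<xi> s0 n \<tau> y) \<longlonglongrightarrow> \<omega> y" using P s0 by blast
    ultimately show "\<omega>' = \<omega>" by (intro ext) (meson LIMSEQ_unique)
  qed
  thus ?thesis using gU \<omega>_def by blast
qed

theorem proposition3p9:
  fixes \<xi> R\<^sub>1 R\<^sub>2 :: real and \<sigma> :: "int^'d \<Rightarrow> real"
  assumes "CARD('d) \<ge> 2"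
    and "\<xi> > 0"
    and "gen_mass_config \<sigma>"
    and "R\<^sub>1 > 0"
    and "supp \<sigma> \<subseteq> Bhat \<xi> R\<^sub>1"
    and "R\<^sub>2 > R\<^sub>1 + \<xi>"
  shows "GDS \<xi> R\<^sub>2 (GDS \<xi> R\<^sub>1 \<sigma>) = GDS \<xi> R\<^sub>2 \<sigma>"
proof -
  have xi: "\<xi> > 0" and R1: "R\<^sub>1 > 0" and R2: "R\<^sub>2 > 0" using assms by auto
  let ?A1 = "Bhat \<xi> R\<^sub>1 :: (int^'d) set" and ?A2 = "Bhat \<xi> R\<^sub>2 :: (int^'d) set"
  have sub: "?A1 \<subseteq> ?A2" using assms(6) xi unfolding Bhat_def by auto
  obtain U1 where g1: "good \<xi> ?A1 \<sigma> U1" and G1: "GDS \<xi> R\<^sub>1 \<sigma> = (\<lambda>y. \<sigma> y + Dl \<xi> U1 y)"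
    using GDS_char[OF xi R1] by blast
  define \<eta>1 where "\<eta>1 = (\<lambda>y. \<sigma> y + Dl \<xi> U1 y)"
  obtain U2 where g2: "good \<xi> ?A2 \<eta>1 U2" and G2: "GDS \<xi> R\<^sub>2 \<eta>1 = (\<lambda>y. \<eta>1 y + Dl \<xi> U2 y)"
    using GDS_char[OF xi R2] by blast
  obtain U3 where g3: "good \<xi> ?A2 \<sigma> U3" and G3: "GDS \<xi> R\<^sub>2 \<sigma> = (\<lambda>y. \<sigma> y + Dl \<xi> U3 y)"
    using GDS_char[OF xi R2] by blast
  define U where "U = (\<lambda>y. U1 y + U2 y)"
  have eq: "\<sigma> y + Dl \<xi> U y = \<eta>1 y + Dl \<xi> U2 y" for y
    unfolding U_def Dl_add \<eta>1_def by simp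
  have gU: "good \<xi> ?A2 \<sigma> U"
    unfolding good_def
  proof (intro conjI allI impI ballI)
    fix y show "U y \<ge> 0" using g1 g2 unfolding good_def U_def by (simp add: add_nonneg_nonneg)
  next
    fix y assume "y \<notin> ?A2"
    thus "U y = 0" using g1 g2 sub unfolding good_def U_def by auto
  next
    fix y assume "y \<in> ?A2"
    thus "\<sigma> y + Dl \<xi> U y \<le> 0" unfolding eq using g2 unfolding good_def by blast
  next
    fix y assume pos: "U y > 0"
    show "\<sigma> y + Dl \<xi> U y = 0"
    proof (cases "U2 y > 0")
      case True thus ?thesis unfolding eq using g2 unfolding good_def by blast
    next
      case False
      have "U2 y \<ge> 0" using g2 unfolding good_def by blast
      hence U2y: "U2 y = 0" using False by linarith
      hence "U1 y > 0" using pos U_def by simp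
      hence U1p: "U1 y > 0" .
      have e1: "\<eta>1 y = 0" using g1 U1p unfolding good_def \<eta>1_def by blast
      have yA1: "y \<in> ?A1"
      proof (rule ccontr)
        assume "y \<notin> ?A1" hence "U1 y = 0" using g1 unfolding good_def by blast
        thus False using U1p by simp
      qed
      have le: "\<eta>1 y + Dl \<xi> U2 y \<le> 0" using g2 yA1 sub unfolding good_def by blast
      have "Dl \<xi> U2 y \<ge> 0"
        unfolding Dl_formula[OF xi] U2y using g2 unfolding good_def
        by (simp add: sum_nonneg)
      thus ?thesis unfolding eq using le e1 by simp
    qed
  qed
  have "U3 = U" by (rule good_unique[OF xi finite_Bhat[OF xi] g3 gU])
  hence "GDS \<xi> R\<^sub>2 \<sigma> = (\<lambda>y. \<eta>1 y + Dl \<xi> U2 y)" using G3 eq by simp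
  thus ?thesis using G1 G2 \<eta>1_def by simp
qed

end
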